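(* Let $n\ge 2$. Under optimal play, the Sign Game on the complete graph $K_n$ is won by Player N, with the following exceptions: if Player N is Player 1 and $n=2$, then Player P wins; if Player N is Player 1 and $n=4$, the game is a draw.
   Context: The Sign Game on a finite simple undirected graph $G$: two players, Player P and Player N, alternate turns; the player who moves first is called Player 1 and the other Player 2 (either of P, N may be Player 1). On a turn, a player chooses a vertex of $G$ not yet assigned a value and assigns it $+1$ or $-1$. The game ends when every vertex has been assigned. The score of an edge $uv$ is the product of the values of $u$ and $v$, and the score $s(G)$ of the game is the sum of the scores of all edges. Player P wins if $s(G)>0$, Player N wins if $s(G)<0$, and the game is a draw if $s(G)=0$. "Under optimal play" means both players play optimally, each with primary goal of winning and secondary goal of at least drawing; the result (P wins, N wins, or draw) is the outcome of this finite perfect-information game under such play, i.e. the stated player has a strategy guaranteeing that result (and for a draw, each player can guarantee not losing). $K_n$ is the complete graph on $n$ vertices. *)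

theory Defs
  imports Main
begin

text \<open>A (partial) assignment maps each vertex to
None (not yet assigned) or Some s with s \<in> {1,-1}.\<close>

definition edges :: "'v set \<Rightarrow> ('v \<Rightarrow> 'v \<Rightarrow> bool) \<Rightarrow> 'v set set" where
  "edges V E = {{u, v} | u v. u \<in> V \<and> v \<in> V \<and> E u v}"

definition game_score :: "'v set \<Rightarrow> ('v \<Rightarrow> 'v \<Rightarrow> bool) \<Rightarrow> ('v \<Rightarrow> int option) \<Rightarrow> int" where
  "game_score V E a = (\<Sum>e\<in>edges V E. \<Prod>x\<in>e. the (a x))"

text \<open>Minimax value of the game (outcome: 1 = P wins, 0 = draw, -1 = N wins)
from assignment a, with at most k moves remaining; pturn says that Player P
is to move.  P maximises and N minimises the sign of the final score, which
encodes "primary goal winning, secondary goal at least drawing".\<close>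
fun game_val :: "nat \<Rightarrow> 'v set \<Rightarrow> ('v \<Rightarrow> 'v \<Rightarrow> bool) \<Rightarrow> ('v \<Rightarrow> int option) \<Rightarrow> bool \<Rightarrow> int" where
  "game_val 0 V E a pturn = sgn (game_score V E a)"
| "game_val (Suc k) V E a pturn =
     (let opts = {game_val k V E (a(v := Some s)) (\<not> pturn) | v s. v \<in> V \<and> a v = None \<and> s \<in> {1, -1}}
      in if opts = {} then sgn (game_score V E a)
         else if pturn then Max opts else Min opts)"

text \<open>Outcome of the Sign Game on (V,E) under optimal play; p_first says Player P is Player 1.\<close>
definition sign_game_outcome :: "'v set \<Rightarrow> ('v \<Rightarrow> 'v \<Rightarrow> bool) \<Rightarrow> bool \<Rightarrow> int" where
  "sign_game_outcome V E p_first = game_val (card V) V E (\<lambda>_. None) p_first"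

definition K_vertices :: "nat \<Rightarrow> nat set" where "K_vertices n = {..<n}"
definition K_adj :: "nat \<Rightarrow> nat \<Rightarrow> bool" where "K_adj u v = (u \<noteq> v)"

end

theory Submission
  imports Defs
begin

definition sig :: "nat \<Rightarrow> (nat \<Rightarrow> int option) \<Rightarrow> int" where
  "sig n a = (\<Sum>v<n. case a v of None \<Rightarrow> 0 | Some x \<Rightarrow> x)"

fun FF :: "nat \<Rightarrow> int \<Rightarrow> bool \<Rightarrow> int" where
  "FF k t True = t + (if odd k then 1 else 0)"
| "FF k t False = (if t \<ge> 1 then t - (if odd k then 1 else 0)
                   else if k = 0 then 0 else if odd k then 1 else 2)"

lemma sq_lemma:
  fixes x :: "nat \<Rightarrow> int"
  assumes "\<forall>v<n. x v = 1 \<or> x v = -1"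
  shows "2 * (\<Sum>v<n. \<Sum>u<v. x u * x v) = (\<Sum>v<n. x v)^2 - int n"
  using assms
proof (induction n)
  case 0 then show ?case by simp
next
  case (Suc n)
  have IH: "2 * (\<Sum>v<n. \<Sum>u<v. x u * x v) = (\<Sum>v<n. x v)^2 - int n"
    using Suc by auto
  have xn: "x n * x n = 1" using Suc.prems by auto
  have "(\<Sum>u<n. x u * x n) = (\<Sum>v<n. x v) * x n" by (simp add: sum_distrib_right)
  then show ?case using IH xn by (simp add: power2_eq_square algebra_simps)
qed

lemma edges_K:
  "edges {..<n} K_adj = (\<lambda>(v,u). {u,v}) ` (SIGMA v:{..<n}. {..<v})"
proof
  show "edges {..<n} K_adj \<subseteq> (\<lambda>(v,u). {u,v}) ` (SIGMA v:{..<n}. {..<v})"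
  proof
    fix e assume "e \<in> edges {..<n} K_adj"
    then obtain u v where e: "e = {u,v}" "u < n" "v < n" "u \<noteq> v"
      unfolding edges_def K_adj_def by auto
    show "e \<in> (\<lambda>(v,u). {u,v}) ` (SIGMA v:{..<n}. {..<v})"
    proof (cases "u < v")
      case True
      then show ?thesis using e by (auto intro!: image_eqI[where x="(v,u)"])
    next
      case False
      then have "v < u" using e by auto
      then show ?thesis using e by (auto intro!: image_eqI[where x="(u,v)"])
    qed
  qed
next
  show "(\<lambda>(v,u). {u,v}) ` (SIGMA v:{..<n}. {..<v}) \<subseteq> edges {..<n} K_adj"
    unfolding edges_def K_adj_def by force
qed

lemma inj_K: "inj_on (\<lambda>(v,u). {u::nat,v}) (SIGMA v:{..<n}. {..<v})"
  unfolding inj_on_def by (auto simp: doubleton_eq_iff)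

lemma score_K:
  assumes "\<forall>v<n. a v = Some 1 \<or> a v = Some (-1)"
  shows "2 * game_score {..<n} K_adj a = (sig n a)^2 - int n"
proof -
  define x where "x = (\<lambda>v. the (a v))"
  have "game_score {..<n} K_adj a = (\<Sum>p\<in>(SIGMA v:{..<n}. {..<v}). \<Prod>y\<in>(\<lambda>(v,u). {u,v}) p. the (a y))"
    unfolding game_score_def edges_K by (rule sum.reindex[OF inj_K, unfolded comp_def])
  also have "\<dots> = (\<Sum>v<n. \<Sum>u<v. \<Prod>y\<in>{u,v}. the (a y))"
    by (subst sum.Sigma) (auto intro!: sum.cong simp: split_def)
  also have "\<dots> = (\<Sum>v<n. \<Sum>u<v. x u * x v)"
    by (intro sum.cong refl) (auto simp: x_def)
  finally have 1: "game_score {..<n} K_adj a = (\<Sum>v<n. \<Sum>u<v. x u * x v)" .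
  have 2: "sig n a = (\<Sum>v<n. x v)"
    unfolding sig_def x_def by (rule sum.cong) (use assms in auto)
  have "\<forall>v<n. x v = 1 \<or> x v = -1" using assms x_def by auto
  from sq_lemma[OF this] show ?thesis using 1 2 by simp
qed

lemma sgn_mono_sq:
  fixes x y N :: int
  assumes "0 \<le> x" "x \<le> y"
  shows "sgn (x^2 - N) \<le> sgn (y^2 - N)"
proof -
  have "x^2 \<le> y^2" using assms by (simp add: power_mono)
  then show ?thesis by (auto simp: sgn_if)
qed

lemma FF_nonneg: "t \<ge> 0 \<Longrightarrow> FF k t p \<ge> 0"
  by (cases p) auto

lemma arP:
  fixes s N :: int
  shows "max (sgn ((FF k \<bar>s+1\<bar> False)^2 - N)) (sgn ((FF k \<bar>s-1\<bar> False)^2 - N))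
         = sgn ((FF (Suc k) \<bar>s\<bar> True)^2 - N)"
proof (cases "s \<ge> 0")
  case True
  have e: "FF k \<bar>s+1\<bar> False = FF (Suc k) \<bar>s\<bar> True" using True by auto
  have "FF k \<bar>s-1\<bar> False \<le> FF k \<bar>s+1\<bar> False" using True by auto
  from sgn_mono_sq[OF FF_nonneg this] e show ?thesis by (metis abs_ge_zero max.absorb1 max.absorb2)
next
  case False
  have e: "FF k \<bar>s-1\<bar> False = FF (Suc k) \<bar>s\<bar> True" using False by auto
  have "FF k \<bar>s+1\<bar> False \<le> FF k \<bar>s-1\<bar> False" using False by auto
  from sgn_mono_sq[OF FF_nonneg this] e show ?thesis by (metis abs_ge_zero max.absorb1 max.absorb2)
qed

lemma arN:
  fixes s N :: int
  shows "min (sgn ((FF k \<bar>s+1\<bar> True)^2 - N)) (sgn ((FF k \<bar>s-1\<bar> True)^2 - N))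
         = sgn ((FF (Suc k) \<bar>s\<bar> False)^2 - N)"
proof (cases "s \<ge> 0")
  case True
  have e: "FF k \<bar>s-1\<bar> True = FF (Suc k) \<bar>s\<bar> False" using True by auto
  have "FF k \<bar>s-1\<bar> True \<le> FF k \<bar>s+1\<bar> True" using True by auto
  from sgn_mono_sq[OF FF_nonneg this] e show ?thesis by (metis abs_ge_zero min.absorb1 min.absorb2)
next
  case False
  have e: "FF k \<bar>s+1\<bar> True = FF (Suc k) \<bar>s\<bar> False" using False by auto
  have "FF k \<bar>s+1\<bar> True \<le> FF k \<bar>s-1\<bar> True" using False by auto
  from sgn_mono_sq[OF FF_nonneg this] e show ?thesis by (metis abs_ge_zero min.absorb1 min.absorb2)
qed

lemma sig_upd:
  assumes "v < n" "a v = None"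
  shows "sig n (a(v := Some s)) = sig n a + s"
proof -
  have "sig n (a(v := Some s)) = s + (\<Sum>w\<in>{..<n}-{v}. case (a(v := Some s)) w of None \<Rightarrow> 0 | Some x \<Rightarrow> x)"
    unfolding sig_def using assms by (subst sum.remove[of _ v]) auto
  also have "(\<Sum>w\<in>{..<n}-{v}. case (a(v := Some s)) w of None \<Rightarrow> 0 | Some x \<Rightarrow> x)
      = (\<Sum>w\<in>{..<n}-{v}. case a w of None \<Rightarrow> 0 | Some x \<Rightarrow> x)"
    by (rule sum.cong) auto
  also have "\<dots> = sig n a"
    unfolding sig_def using assms by (subst (2) sum.remove[of _ v]) auto
  finally show ?thesis by (simp add: fun_upd_def add.commute)
qed

lemma main:
  assumes "\<forall>v<n. a v = None \<or> a v = Some 1 \<or> a v = Some (-1)"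
    and "card {v. v < n \<and> a v = None} = k"
  shows "game_val k {..<n} K_adj a p = sgn ((FF k \<bar>sig n a\<bar> p)^2 - int n)"
  using assms
proof (induction k arbitrary: a p)
  case 0
  have "{v. v < n \<and> a v = None} = {}" using 0 by simp
  then have nn: "\<forall>v<n. a v \<noteq> None" by auto
  have all: "\<forall>v<n. a v = Some 1 \<or> a v = Some (-1)" using 0(1) nn by blast
  have ff: "FF 0 \<bar>sig n a\<bar> p = \<bar>sig n a\<bar>" by (cases p) auto
  have "sgn (game_score {..<n} K_adj a) = sgn (2 * game_score {..<n} K_adj a)"
    by (simp add: sgn_mult)
  also have "\<dots> = sgn ((sig n a)^2 - int n)" using score_K[OF all] by simp
  finally show ?case using ff by simp
next
  case (Suc k)
  define G where "G = (\<lambda>s::int. sgn ((FF k \<bar>sig n a + s\<bar> (\<not> p))^2 - int n))"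
  have val: "game_val k {..<n} K_adj (a(v := Some s)) (\<not> p) = G s"
    if "v < n" "a v = None" "s \<in> {1, -1}" for v s
  proof -
    have "{w. w < n \<and> (a(v := Some s)) w = None} = {w. w < n \<and> a w = None} - {v}"
      using that by auto
    then have c: "card {w. w < n \<and> (a(v := Some s)) w = None} = k"
      using Suc.prems that by simp
    have i: "\<forall>w<n. (a(v := Some s)) w = None \<or> (a(v := Some s)) w = Some 1 \<or> (a(v := Some s)) w = Some (-1)"
      using Suc.prems that by auto
    show ?thesis using Suc.IH[OF i c, of "\<not> p"] sig_upd[of v n a s, OF that(1,2)] unfolding G_def by (simp add: fun_upd_def)
  qed
  have "{w. w < n \<and> a w = None} \<noteq> {}" using Suc.prems by (metis card.empty nat.distinct(1))
  then obtain v0 where v0: "v0 < n" "a v0 = None" by auto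
  have opts: "{game_val k {..<n} K_adj (a(v := Some s)) (\<not> p) | v s. v \<in> {..<n} \<and> a v = None \<and> s \<in> {1, -1}}
     = {G 1, G (-1)}"
  proof
    show "{game_val k {..<n} K_adj (a(v := Some s)) (\<not> p) | v s. v \<in> {..<n} \<and> a v = None \<and> s \<in> {1, -1}}
     \<subseteq> {G 1, G (-1)}" using val by auto
    show "{G 1, G (-1)} \<subseteq> {game_val k {..<n} K_adj (a(v := Some s)) (\<not> p) | v s. v \<in> {..<n} \<and> a v = None \<and> s \<in> {1, -1}}"
    proof -
      have g1: "G 1 = game_val k {..<n} K_adj (a(v0 := Some 1)) (\<not> p)" using val[OF v0, of 1] by simp
      have g2: "G (-1) = game_val k {..<n} K_adj (a(v0 := Some (-1))) (\<not> p)" using val[OF v0, of "-1"] by simp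
      show ?thesis unfolding g1 g2 using v0 by blast
    qed
  qed
  show ?case
  proof (cases p)
    case True
    have "game_val (Suc k) {..<n} K_adj a p = max (G 1) (G (-1))"
      unfolding game_val.simps(2) Let_def opts using True by simp
    also have "\<dots> = sgn ((FF (Suc k) \<bar>sig n a\<bar> p)^2 - int n)"
      unfolding G_def using True arP[of k "sig n a" "int n"] by (simp only: not_True_eq_False diff_conv_add_uminus)
    finally show ?thesis .
  next
    case False
    have "game_val (Suc k) {..<n} K_adj a p = min (G 1) (G (-1))"
      unfolding game_val.simps(2) Let_def opts using False by simp
    also have "\<dots> = sgn ((FF (Suc k) \<bar>sig n a\<bar> p)^2 - int n)"
      unfolding G_def using False arN[of k "sig n a" "int n"] by (simp only: not_False_eq_True diff_conv_add_uminus)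
    finally show ?thesis .
  qed
qed

lemma outcome_K: "sign_game_outcome (K_vertices n) K_adj p = sgn ((FF n 0 p)^2 - int n)"
proof -
  have c: "card {v. v < n \<and> (\<lambda>_. None :: int option) v = None} = n" by simp
  have s0: "sig n (\<lambda>_. None) = 0" unfolding sig_def by simp
  have "card (K_vertices n) = n" unfolding K_vertices_def by simp
  then show ?thesis unfolding sign_game_outcome_def
    using main[OF _ c, of p] s0 unfolding K_vertices_def by simp
qed

theorem theorem1:
  fixes n :: nat
  assumes "n \<ge> 2"
  shows "sign_game_outcome (K_vertices n) K_adj True = -1 \<and>
         sign_game_outcome (K_vertices n) K_adj False =
           (if n = 2 then 1 else if n = 4 then 0 else -1)"
proof
  show "sign_game_outcome (K_vertices n) K_adj True = -1"
    unfolding outcome_K using assms by (auto simp: sgn_if)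
  show "sign_game_outcome (K_vertices n) K_adj False =
           (if n = 2 then 1 else if n = 4 then 0 else -1)"
  proof (cases "odd n")
    case True
    then have "n \<noteq> 2" "n \<noteq> 4" by auto
    then show ?thesis unfolding outcome_K using assms True by (auto simp: sgn_if)
  next
    case False
    then have "n = 2 \<or> n = 4 \<or> n \<ge> 6" using assms by presburger
    then show ?thesis unfolding outcome_K using assms False by (auto simp: sgn_if)
  qed
qed

end
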